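(* A non-degenerate hydrodynamic Poisson bracket coming from a kinetic model has signature $(l,q)$ with $l\ge 1$ and $q\ge1$.
   Context: Fields $u_1(x),\dots,u_N(x)$ on $\mathbb R$ vanish at infinity with all derivatives; $F_n=\delta F/\delta u_n$; repeated indices are summed. A hydrodynamic bracket is $\{F,G\}=\int(\partial_xF_n\,\alpha_{nm}(\mathbf u)G_m+F_n\beta_{nm}(\mathbf u,\partial_x\mathbf u)G_m)\,\mathrm dx$ with $\alpha$ symmetric depending only on $\mathbf u$, $\beta$ linear in $\partial_x\mathbf u$, and $\partial_x\alpha=\beta+\beta^t$. It is non-degenerate if $\alpha$ is invertible, and Poisson if it satisfies the Jacobi identity. It is known (Dubrovin–Novikov) that a non-degenerate hydrodynamic bracket is Poisson iff there is a locally invertible change of variables $\mathbf u\mapsto\boldsymbol\nu(\mathbf u)$ in which it reads $\int\partial_x\overline F_n\,g_{nm}\overline G_m\,\mathrm dx$ with $g$ a constant symmetric non-degenerate matrix; the signature of the bracket is the signature $(l,q)$ of $g$ ($l$ positive, $q$ negative eigenvalues), which is independent of the choice of such coordinates. The bracket comes from a kinetic model if there is a local change of variables $\mathbf u\mapsto\mathbf P(\mathbf u)=(P_0,\dots,P_{N-1})$ mapping it to a truncated Kupershmidt–Manin bracket, i.e. the hydrodynamic bracket in the fields $P_0,\dots,P_{N-1}$ (indices summed from $0$ to $N-1$) with $\alpha_{nm}=(n+m)P_{n+m-1}$ and $\beta_{nm}=n\,\partial_xP_{n+m-1}$, where for $n\ge N$ the quantities $P_n=P_n(P_0,\dots,P_{N-1})$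 are given smooth functions (a closure). *)

theory Defs
  imports "HOL-Analysis.Analysis"
begin

text \<open>Points of field space R^N are vectors of type real^'n, the N = CARD'n
 components being numbered 0..N-1 via the enumeration of the finite type 'n.
 Matrices are real^'n^'n.\<close>

definition idx :: "nat \<Rightarrow> ('n::enum)" where
  "idx k = (Enum.enum :: ('n::enum) list) ! k"

definition num :: "('n::enum) \<Rightarrow> nat" where
  "num i = (THE k. k < length (Enum.enum :: ('n::enum) list) \<and> (Enum.enum :: ('n::enum) list) ! k = i)"

text \<open>Hydrodynamic bracket on an open domain U of field values:
 alpha = a u symmetric, beta = b u w linear in w = d/dx u, and
 d/dx alpha(u(x)) = beta + beta^t, i.e. D a (u) w = b u w + (b u w)^t.\<close>

definition hydro_bracket ::
  "(real^('n::enum)) set \<Rightarrow> (real^('n::enum) \<Rightarrow> real^('n::enum)^('n::enum)) \<Rightarrow> (real^('n::enum) \<Rightarrow> real^('n::enum) \<Rightarrow> real^('n::enum)^('n::enum)) \<Rightarrow> bool" where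
  "hydro_bracket U a b \<longleftrightarrow> open U \<and>
     (\<forall>u\<in>U. transpose (a u) = a u \<and> linear (b u) \<and>
        (a has_derivative (\<lambda>w. b u w + transpose (b u w))) (at u))"

definition nondegenerate :: "(real^('n::enum)) set \<Rightarrow> (real^('n::enum) \<Rightarrow> real^('n::enum)^('n::enum)) \<Rightarrow> bool" where
  "nondegenerate U a \<longleftrightarrow> (\<forall>u\<in>U. invertible (a u))"

definition change_of_vars ::
  "(real^('n::enum)) set \<Rightarrow> (real^('n::enum) \<Rightarrow> real^('n::enum)) \<Rightarrow> (real^('n::enum) \<Rightarrow> real^('n::enum)^('n::enum)) \<Rightarrow> bool" where
  "change_of_vars V phi J \<longleftrightarrow>
     (\<forall>u\<in>V. (phi has_derivative (\<lambda>w. J u *v w)) (at u) \<and> invertible (J u) \<and> J differentiable (at u))"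

text \<open>Coefficients of the transformed bracket, expressed at the point u (old variables)
 and with w = d/dx u: alpha' = J alpha J^t, beta' = (d/dx J) alpha J^t + J beta J^t.\<close>

definition tr_alpha ::
  "(real^('n::enum) \<Rightarrow> real^('n::enum)^('n::enum)) \<Rightarrow> (real^('n::enum) \<Rightarrow> real^('n::enum)^('n::enum)) \<Rightarrow> real^('n::enum) \<Rightarrow> real^('n::enum)^('n::enum)" where
  "tr_alpha a J u = J u ** a u ** transpose (J u)"

definition tr_beta ::
  "(real^('n::enum) \<Rightarrow> real^('n::enum)^('n::enum)) \<Rightarrow> (real^('n::enum) \<Rightarrow> real^('n::enum) \<Rightarrow> real^('n::enum)^('n::enum)) \<Rightarrow> (real^('n::enum) \<Rightarrow> real^('n::enum)^('n::enum))
     \<Rightarrow> real^('n::enum) \<Rightarrow> real^('n::enum) \<Rightarrow> real^('n::enum)^('n::enum)" where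
  "tr_beta a b J u w = frechet_derivative J (at u) w ** a u ** transpose (J u)
                        + J u ** b u w ** transpose (J u)"

text \<open>Flat (Dubrovin--Novikov) coordinates: the bracket becomes int dF g G dx, g constant.\<close>

definition flat_coordinates ::
  "(real^('n::enum)) set \<Rightarrow> (real^('n::enum) \<Rightarrow> real^('n::enum)^('n::enum)) \<Rightarrow> (real^('n::enum) \<Rightarrow> real^('n::enum) \<Rightarrow> real^('n::enum)^('n::enum))
     \<Rightarrow> (real^('n::enum) \<Rightarrow> real^('n::enum)) \<Rightarrow> (real^('n::enum) \<Rightarrow> real^('n::enum)^('n::enum)) \<Rightarrow> real^('n::enum)^('n::enum) \<Rightarrow> bool" where
  "flat_coordinates U a b nu J g \<longleftrightarrow> change_of_vars U nu J \<and> transpose g = g \<and> invertible g \<and>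
     (\<forall>u\<in>U. tr_alpha a J u = g \<and> (\<forall>w. tr_beta a b J u w = 0))"

text \<open>Poisson property of a non-degenerate hydrodynamic bracket, via Dubrovin--Novikov.\<close>

definition poisson_DN ::
  "(real^('n::enum)) set \<Rightarrow> (real^('n::enum) \<Rightarrow> real^('n::enum)^('n::enum)) \<Rightarrow> (real^('n::enum) \<Rightarrow> real^('n::enum) \<Rightarrow> real^('n::enum)^('n::enum)) \<Rightarrow> bool" where
  "poisson_DN U a b \<longleftrightarrow> (\<exists>nu J g. flat_coordinates U a b nu J g)"

text \<open>Number of positive / negative eigenvalues (with multiplicity) of a symmetric matrix:
 dimension of the span of the eigenvectors for positive / negative eigenvalues.\<close>

definition pos_index :: "real^('n::enum)^('n::enum) \<Rightarrow> nat" where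
  "pos_index g = dim (span {v. \<exists>c>0. g *v v = c *\<^sub>R v})"

definition neg_index :: "real^('n::enum)^('n::enum) \<Rightarrow> nat" where
  "neg_index g = dim (span {v. \<exists>c<0. g *v v = c *\<^sub>R v})"

definition bracket_signature ::
  "(real^('n::enum)) set \<Rightarrow> (real^('n::enum) \<Rightarrow> real^('n::enum)^('n::enum)) \<Rightarrow> (real^('n::enum) \<Rightarrow> real^('n::enum) \<Rightarrow> real^('n::enum)^('n::enum)) \<Rightarrow> nat \<Rightarrow> nat \<Rightarrow> bool" where
  "bracket_signature U a b l q \<longleftrightarrow>
     (\<exists>nu J g. flat_coordinates U a b nu J g \<and> pos_index g = l \<and> neg_index g = q)"

text \<open>Kupershmidt--Manin moments with closure: P_k = k-th component of P for k < N,
 P_k = clos k (P_0,...,P_(N-1)) for k >= N.\<close>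

definition KMP :: "(nat \<Rightarrow> real^('n::enum) \<Rightarrow> real) \<Rightarrow> (real^('n::enum) \<Rightarrow> real^('n::enum)) \<Rightarrow> nat \<Rightarrow> real^('n::enum) \<Rightarrow> real" where
  "KMP clos P k u = (if k < CARD('n::enum) then P u $ idx k else clos k (P u))"

definition from_kinetic_model ::
  "(real^('n::enum)) set \<Rightarrow> (real^('n::enum) \<Rightarrow> real^('n::enum)^('n::enum)) \<Rightarrow> (real^('n::enum) \<Rightarrow> real^('n::enum) \<Rightarrow> real^('n::enum)^('n::enum)) \<Rightarrow> bool" where
  "from_kinetic_model U a b \<longleftrightarrow>
     (\<exists>V P JP clos. V \<subseteq> U \<and> open V \<and> V \<noteq> {} \<and> change_of_vars V P JP \<and>
        (\<forall>k\<ge>CARD('n::enum). \<forall>p. clos k differentiable (at p)) \<and>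
        (\<forall>u\<in>V. \<forall>i j.
            tr_alpha a JP u $ i $ j = of_nat (num i + num j) * KMP clos P (num i + num j - 1) u \<and>
            (\<forall>w. tr_beta a b JP u w $ i $ j =
                   of_nat (num i) * frechet_derivative (KMP clos P (num i + num j - 1)) (at u) w)))"

end

theory Submission
  imports Defs
begin

lemma inner_transp: "inner x (A *v y) = inner (transpose A *v x) (y::real^'n)"
  by (simp add: dot_lmul_matrix)

lemma sym_inner: fixes g :: "real^'n^'n" assumes "transpose g = g"
  shows "inner x (g *v y) = inner y (g *v x)"
  by (metis assms inner_transp inner_commute)

lemma pos_eig:
  fixes g :: "real^'n^'n"
  assumes sym: "transpose g = g" and x: "inner x (g *v x) > 0"
  shows "\<exists>v c. v \<noteq> 0 \<and> c > 0 \<and> g *v v = c *\<^sub>R v"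
proof -
  define q where "q z = inner z (g *v z)" for z
  have cont: "continuous_on (sphere 0 1) q"
    unfolding q_def by (intro continuous_intros linear_continuous_on) auto
  have x0: "x \<noteq> 0" using x by auto
  have xs: "x /\<^sub>R norm x \<in> sphere 0 1" using x0 by simp
  obtain x0 where x0s: "x0 \<in> sphere 0 1" and mx: "\<And>y. y \<in> sphere 0 1 \<Longrightarrow> q y \<le> q x0"
    using continuous_attains_sup[OF compact_sphere _ cont] xs by blast
  define m where "m = q x0"
  have hom: "q (c *\<^sub>R z) = c^2 * q z" for c z
    by (simp add: q_def algebra_simps power2_eq_square)
  have "q (x /\<^sub>R norm x) > 0" using hom[of "inverse (norm x)" x] x x0 by (simp add: q_def)
  then have mpos: "m > 0" using mx[OF xs] m_def by simp
  have hle: "q z - m * inner z z \<le> 0" for z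
  proof (cases "z = 0")
    case True then show ?thesis by (simp add: q_def)
  next
    case False
    have "q (z /\<^sub>R norm z) \<le> m" using mx[of "z /\<^sub>R norm z"] False m_def by simp
    moreover have "q z = (norm z)^2 * q (z /\<^sub>R norm z)"
      using hom[of "inverse (norm z)" z] False by (simp add: field_simps)
    ultimately have "q z \<le> (norm z)^2 * m"
      by (simp add: mult_left_mono)
    then show ?thesis by (simp add: power2_norm_eq_inner mult.commute)
  qed
  have x0n: "inner x0 x0 = 1" using x0s by (simp add: norm_eq_sqrt_inner)
  define r where "r = g *v x0 - m *\<^sub>R x0"
  have r0: "r = 0"
  proof (rule ccontr)
    assume "r \<noteq> 0"
    then have R: "inner r r > 0" by simp
    define H where "H = q r - m * inner r r"
    have exp: "q (x0 + t *\<^sub>R r) - m * inner (x0 + t *\<^sub>R r) (x0 + t *\<^sub>R r)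
       = 2 * t * inner r r + t^2 * H" for t
    proof -
      have s: "inner x0 (g *v r) = inner r (g *v x0)" using sym_inner[OF sym] by blast
      have e: "inner r (g *v x0) = inner r r + m * inner r x0"
        unfolding r_def by (simp add: inner_diff_right algebra_simps)
      have qx: "inner x0 (g *v x0) = m" using m_def q_def by simp
      have e1: "q (x0 + t *\<^sub>R r) = q x0 + t * inner x0 (g *v r) + t * inner r (g *v x0) + t^2 * q r"
        by (simp add: q_def inner_add_left inner_add_right matrix_vector_right_distrib
              matrix_vector_mult_scaleR power2_eq_square algebra_simps)
      have e2: "inner (x0 + t *\<^sub>R r) (x0 + t *\<^sub>R r) = inner x0 x0 + 2 * t * inner r x0 + t^2 * inner r r"
        by (simp add: inner_add_left inner_add_right power2_eq_square algebra_simps inner_commute[of x0 r])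
      have "q (x0 + t *\<^sub>R r) - m * inner (x0 + t *\<^sub>R r) (x0 + t *\<^sub>R r)
         = (q x0 - m) + 2 * t * (inner r (g *v x0) - m * inner r x0) + t^2 * (q r - m * inner r r)"
        unfolding e1 e2 s x0n by (simp add: algebra_simps)
      also have "\<dots> = 2 * t * inner r r + t^2 * H"
        unfolding H_def m_def by (simp add: e[unfolded m_def])
      finally show ?thesis .

    qed
    define t where "t = inner r r / (\<bar>H\<bar> + 1)"
    have tpos: "t > 0" using R by (simp add: t_def)
    have "t * \<bar>H\<bar> \<le> inner r r"
      using R by (simp add: t_def field_simps)
    moreover have "- (t * H) \<le> \<bar>t * H\<bar>" by (rule abs_ge_minus_self)
    moreover have "\<bar>t * H\<bar> = t * \<bar>H\<bar>" using tpos by (simp add: abs_mult)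
    ultimately have "t * H \<ge> - inner r r" by linarith
    then have "2 * inner r r + t * H > 0" using R by linarith
    then have "t * (2 * inner r r + t * H) > 0" using tpos by simp
    moreover have "2 * t * inner r r + t^2 * H \<le> 0" using hle[of "x0 + t *\<^sub>R r"] exp[of t] by simp
    ultimately show False by (simp add: algebra_simps power2_eq_square)
  qed
  show ?thesis
    using r0 mpos x0s unfolding r_def by (intro exI[of _ x0] exI[of _ m]) auto
qed


lemma inner_axis_mat: "inner (axis i 1) ((A::real^'n^'m) *v axis j 1) = A $ i $ j"
proof -
  have "(A *v axis j 1) $ i = A $ i $ j" by (simp add: matrix_vector_mult_basis column_def)
  moreover have "inner (axis i 1) (A *v axis j 1) = (A *v axis j 1) $ i"
    by (simp only: inner_axis') simp
  ultimately show ?thesis by simp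
qed

lemma num_first: "num ((Enum.enum :: ('n::enum) list) ! 0) = 0"
proof -
  have ne: "(Enum.enum :: 'n list) \<noteq> []" using enum_UNIV[where 'a='n] by auto
  then have len: "0 < length (Enum.enum :: 'n list)" by simp
  have d: "distinct (Enum.enum :: 'n list)" by (rule enum_distinct)
  show ?thesis unfolding num_def
  proof (rule the_equality)
    show "0 < length (Enum.enum :: 'n list) \<and> (Enum.enum :: 'n list) ! 0 = Enum.enum ! 0" using len by simp
  next
    fix k assume "k < length (Enum.enum :: 'n list) \<and> (Enum.enum :: 'n list) ! k = Enum.enum ! 0"
    then show "k = 0" using nth_eq_iff_index_eq[OF d, of k 0] len by simp
  qed
qed

lemma dim_pos: fixes S :: "(real^'n::enum) set" assumes "v \<in> S" "v \<noteq> 0" shows "dim (span S) \<ge> 1"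
proof -
  have "v \<in> span S" using assms(1) by (rule span_base)
  then have "\<not> span S \<subseteq> {0}" using assms(2) by auto
  then have "dim (span S) \<noteq> 0" using dim_eq_0 by blast
  then show ?thesis by linarith
qed

lemma mvneg: "(-(g::real^'n^'m)) *v v = -(g *v v)"
  by (simp add: vec_eq_iff matrix_vector_mult_def sum_negf)

lemma neg_eig:
  fixes g :: "real^'n^'n"
  assumes sym: "transpose g = g" and x: "inner x (g *v x) < 0"
  shows "\<exists>v c. v \<noteq> 0 \<and> c < 0 \<and> g *v v = c *\<^sub>R v"
proof -
  have gs: "g $ j $ i = g $ i $ j" for i j
    using arg_cong[OF sym, of "\<lambda>M. M $ i $ j"] by (simp add: transpose_def)
  have "transpose (-g) = -g" by (simp add: transpose_def vec_eq_iff gs)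
  moreover have "inner x ((-g) *v x) > 0" using x by (simp add: mvneg)
  ultimately obtain v c where v: "v \<noteq> 0" "c > 0" and ev: "(-g) *v v = c *\<^sub>R v" using pos_eig by blast
  have "g *v v = - ((-g) *v v)" by (simp add: mvneg)
  also have "\<dots> = (-c) *\<^sub>R v" using ev by simp
  finally show ?thesis using v by (intro exI[of _ v] exI[of _ "-c"]) auto
qed


lemma mv3: "inner y ((A ** B ** transpose A) *v y) = inner (transpose A *v y) (B *v (transpose A *v (y::real^'n)))"
  by (simp add: inner_transp matrix_vector_mul_assoc[symmetric])

lemma inv_inj: "invertible (A::real^'n^'n) \<Longrightarrow> A *v x = 0 \<Longrightarrow> x = 0"
  by (metis invertible_left_inverse matrix_vector_mul_assoc matrix_vector_mul_lid matrix_vector_mult_0_right)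

lemma indef:
  fixes g :: "real^'n^'n"
  assumes sym: "transpose g = g" and inv: "invertible g" and x0: "x \<noteq> 0" and iso: "inner x (g *v x) = 0"
  shows "\<exists>y. inner y (g *v y) > 0" "\<exists>y. inner y (g *v y) < 0"
proof -
  define z where "z = g *v x"
  have z0: "z \<noteq> 0" using inv_inj[OF inv, of x] x0 unfolding z_def by blast
  define c where "c = inner z z"
  have c: "c > 0" using z0 c_def by simp
  define d where "d = inner z (g *v z)"
  have s: "inner x (g *v z) = inner z (g *v x)" using sym_inner[OF sym] by blast
  have exp: "inner (x + t *\<^sub>R z) (g *v (x + t *\<^sub>R z)) = 2 * t * c + t^2 * d" for t
  proof -
    have "inner (x + t *\<^sub>R z) (g *v (x + t *\<^sub>R z)) = inner x (g *v x) + t * inner x (g *v z) + t * inner z (g *v x) + t^2 * inner z (g *v z)"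
      by (simp add: inner_add_left inner_add_right matrix_vector_right_distrib
              matrix_vector_mult_scaleR power2_eq_square algebra_simps)
    moreover have s1: "inner x (g *v z) = c" and s2: "inner z (g *v x) = c"
      using s unfolding c_def z_def by simp_all
    ultimately show ?thesis using iso unfolding d_def by simp
  qed
  define e where "e = c / (\<bar>d\<bar> + 1)"
  have epos: "e > 0" using c by (simp add: e_def)
  have "e * \<bar>d\<bar> \<le> c" using c by (simp add: e_def field_simps)
  moreover have "- (e * d) \<le> \<bar>e * d\<bar>" by (rule abs_ge_minus_self)
  moreover have "e * d \<le> \<bar>e * d\<bar>" by (rule abs_ge_self)
  moreover have "\<bar>e * d\<bar> = e * \<bar>d\<bar>" using epos by (simp add: abs_mult)
  ultimately have b1: "2 * c + e * d > 0" and b2: "- 2 * c + e * d < 0" using c by linarith+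
  have "e * (2 * c + e * d) > 0" using b1 epos by simp
  then have "inner (x + e *\<^sub>R z) (g *v (x + e *\<^sub>R z)) > 0" unfolding exp
    by (simp add: algebra_simps power2_eq_square)
  then show "\<exists>y. inner y (g *v y) > 0" by blast
  have "e * (- 2 * c + e * d) < 0" using b2 epos by (simp add: mult_pos_neg)
  then have "inner (x + (-e) *\<^sub>R z) (g *v (x + (-e) *\<^sub>R z)) < 0" unfolding exp
    by (simp add: algebra_simps power2_eq_square)
  then show "\<exists>y. inner y (g *v y) < 0" by blast
qed

theorem corollary2:
  fixes U :: "(real^('n::enum)) set"
    and a :: "real^('n::enum) \<Rightarrow> real^('n::enum)^('n::enum)"
    and b :: "real^('n::enum) \<Rightarrow> real^('n::enum) \<Rightarrow> real^('n::enum)^('n::enum)"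
    and l q :: nat
  assumes "hydro_bracket U a b"
    and "nondegenerate U a"
    and "poisson_DN U a b"
    and "from_kinetic_model U a b"
    and "bracket_signature U a b l q"
  shows "l \<ge> 1 \<and> q \<ge> 1"
proof -
  obtain V P JP clos where V: "V \<subseteq> U" "V \<noteq> {}" and cv: "change_of_vars V P JP"
    and km: "\<forall>u\<in>V. \<forall>i j.
            tr_alpha a JP u $ i $ j = of_nat (num i + num j) * KMP clos P (num i + num j - 1) u"
    using assms(4) unfolding from_kinetic_model_def by blast
  obtain nu J g where fc: "flat_coordinates U a b nu J g" and l: "pos_index g = l" and q: "neg_index g = q"
    using assms(5) unfolding bracket_signature_def by blast
  from fc have cvJ: "change_of_vars U nu J" and sym: "transpose g = g" and ginv: "invertible g"
    and ga: "\<forall>u\<in>U. tr_alpha a J u = g"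
    unfolding flat_coordinates_def by auto
  obtain u where uV: "u \<in> V" using V by blast
  then have uU: "u \<in> U" using V by blast
  have JPinv: "invertible (JP u)" using cv uV unfolding change_of_vars_def by blast
  have Jinv: "invertible (J u)" using cvJ uU unfolding change_of_vars_def by blast
  define i0 where "i0 = (Enum.enum :: 'n list) ! 0"
  have n0: "num i0 = 0" unfolding i0_def by (rule num_first)
  have A0: "tr_alpha a JP u $ i0 $ i0 = 0" using km uV n0 by simp
  define e where "e = axis i0 (1::real)"
  have e0: "e \<noteq> 0" by (simp add: e_def axis_eq_0_iff)
  define y where "y = transpose (JP u) *v e"
  have y0: "y \<noteq> 0" using inv_inj[OF transpose_invertible[OF JPinv], of e] e0 unfolding y_def by blast
  have ya: "inner y (a u *v y) = 0"
    using A0 mv3[of e "JP u" "a u"] inner_axis_mat[of i0 "tr_alpha a JP u" i0]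
    unfolding tr_alpha_def e_def y_def by simp
  obtain B where B: "transpose (J u) ** B = mat 1"
    using transpose_invertible[OF Jinv] unfolding invertible_def by blast
  define x where "x = B *v y"
  have Jx: "transpose (J u) *v x = y" unfolding x_def
    by (simp only: matrix_vector_mul_assoc B matrix_vector_mul_lid)
  have x0: "x \<noteq> 0" using Jx y0 by auto
  have "inner x (g *v x) = inner y (a u *v y)"
    using ga uU mv3[of x "J u" "a u"] Jx unfolding tr_alpha_def by simp
  then have iso: "inner x (g *v x) = 0" using ya by simp
  obtain v1 c1 where v1: "v1 \<noteq> 0" "c1 > 0" "g *v v1 = c1 *\<^sub>R v1"
    using pos_eig[OF sym] indef(1)[OF sym ginv x0 iso] by blast
  obtain v2 c2 where v2: "v2 \<noteq> 0" "c2 < 0" "g *v v2 = c2 *\<^sub>R v2"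
    using neg_eig[OF sym] indef(2)[OF sym ginv x0 iso] by blast
  have "pos_index g \<ge> 1" unfolding pos_index_def
    by (rule dim_pos[of v1]) (use v1 in auto)
  moreover have "neg_index g \<ge> 1" unfolding neg_index_def
    by (rule dim_pos[of v2]) (use v2 in auto)
  ultimately show ?thesis using l q by simp
qed

end
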